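(* Extend the Thue–Morse sequence $t$ to all of $\mathbb{Z}$ by setting $t(n)=t(-1-n)$ for $n<0$, and define $f(i,j)=t(i+j)$ for all $i,j\in\mathbb{Z}$. Then the coloring $(f(i,j))_{i,j\in\mathbb{Z}}$ of $\mathbb{Z}\times\mathbb{Z}$ is frameless: there do not exist integers $m,n$ and integers $p,q\ge1$ such that $f(m,n+i)=f(m+p,n+i)$ for all $0\le i\le q$ and $f(m+j,n)=f(m+j,n+q)$ for all $0\le j\le p$.
   Context: The Thue–Morse sequence is $t(n)=$ (number of $1$ bits in the binary representation of $n$) mod $2$ for $n\ge0$. A picture frame in a coloring $f$ of $\mathbb{Z}\times\mathbb{Z}$ is a rectangular block $\{m,\dots,m+p\}\times\{n,\dots,n+q\}$ with $p,q\ge1$ whose first and last rows agree and whose first and last columns agree; $f$ is frameless if it contains no picture frame. *)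

theory Defs
  imports Main
begin

fun bitcount :: "nat \<Rightarrow> nat" where
  "bitcount n = (if n = 0 then 0 else n mod 2 + bitcount (n div 2))"

declare bitcount.simps[simp del]

definition thue_morse :: "nat \<Rightarrow> nat" where
  "thue_morse n = bitcount n mod 2"

definition tm_int :: "int \<Rightarrow> nat" where
  "tm_int n = (if n \<ge> 0 then thue_morse (nat n) else thue_morse (nat (-1 - n)))"

definition picture_frame :: "(int \<Rightarrow> int \<Rightarrow> 'a) \<Rightarrow> int \<Rightarrow> int \<Rightarrow> int \<Rightarrow> int \<Rightarrow> bool" where
  "picture_frame f m n p q \<longleftrightarrow> p \<ge> 1 \<and> q \<ge> 1 \<and>
     (\<forall>i. 0 \<le> i \<and> i \<le> q \<longrightarrow> f m (n + i) = f (m + p) (n + i)) \<and>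
     (\<forall>j. 0 \<le> j \<and> j \<le> p \<longrightarrow> f (m + j) n = f (m + j) (n + q))"

definition frameless :: "(int \<Rightarrow> int \<Rightarrow> 'a) \<Rightarrow> bool" where
  "frameless f \<longleftrightarrow> \<not> (\<exists>m n p q. picture_frame f m n p q)"

end

theory Submission
  imports Defs
begin

lemma bc_even: "bitcount (2*k) = bitcount k"
  by (subst bitcount.simps) (cases "k = 0", simp_all add: bitcount.simps[of 0])

lemma bc_odd: "bitcount (2*k+1) = Suc (bitcount k)"
  by (subst bitcount.simps) simp

lemma bc_odd'[simp]: "bitcount (Suc (2*k)) = Suc (bitcount k)"
  using bc_odd by simp

definition tb :: "int \<Rightarrow> bool" where
  "tb n = odd (bitcount (nat (if n \<ge> 0 then n else -1 - n)))"

definition vb :: "int \<Rightarrow> bool" where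
  "vb n = (if n \<ge> 0 then tb n else \<not> tb n)"

lemma tm_tb: "tm_int n = (if tb n then 1 else 0)"
  unfolding tm_int_def tb_def thue_morse_def by (auto simp: odd_iff_mod_2_eq_one)

lemma tb_even_pos: "n \<ge> 0 \<Longrightarrow> tb (2*n) = tb n"
proof -
  assume "n \<ge> 0"
  then have "nat (2*n) = 2 * nat n" by simp
  then show ?thesis using \<open>n \<ge> 0\<close> unfolding tb_def by (simp add: bc_even)
qed

lemma tb_odd_pos: "n \<ge> 0 \<Longrightarrow> tb (2*n+1) = (\<not> tb n)"
proof -
  assume "n \<ge> 0"
  then have "nat (2*n+1) = 2 * nat n + 1" by simp
  then show ?thesis using \<open>n \<ge> 0\<close> unfolding tb_def by (simp add: bc_odd)
qed

lemma tb_even_neg: "n < 0 \<Longrightarrow> tb (2*n) = (\<not> tb n)"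
proof -
  assume "n < 0"
  then have "nat (-1 - 2*n) = 2 * nat (-1-n) + 1" by simp
  then show ?thesis using \<open>n < 0\<close> unfolding tb_def by (simp add: bc_odd)
qed

lemma tb_odd_neg: "n < 0 \<Longrightarrow> tb (2*n+1) = tb n"
proof -
  assume "n < 0"
  then have "nat (-1 - (2*n+1)) = 2 * nat (-1-n)" by simp
  then show ?thesis using \<open>n < 0\<close> unfolding tb_def by (simp add: bc_even)
qed

lemma blocky: "X = tb \<or> X = vb \<Longrightarrow> X (2*n) \<noteq> X (2*n+1)"
  by (cases "n \<ge> 0") (auto simp: vb_def tb_even_pos tb_odd_pos tb_even_neg tb_odd_neg)

lemma desub: "X = tb \<or> X = vb \<Longrightarrow> (\<lambda>n. X (2*n)) = tb \<or> (\<lambda>n. X (2*n)) = vb"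
proof -
  assume a: "X = tb \<or> X = vb"
  have 1: "(\<lambda>n. tb (2*n)) = vb"
    by (rule ext) (auto simp: vb_def tb_even_pos tb_even_neg)
  have 2: "(\<lambda>n. vb (2*n)) = tb"
    by (rule ext) (auto simp: vb_def tb_even_pos tb_even_neg)
  show ?thesis using a 1 2 by auto
qed

lemma alt:
  fixes X :: "int \<Rightarrow> bool" and k :: nat
  assumes "\<forall>y. s \<le> y \<and> y < s + p \<longrightarrow> X y \<noteq> X (y+1)"
  shows "int k \<le> p \<Longrightarrow> X (s + int k) = (if even k then X s else \<not> X s)"
proof (induction k)
  case 0
  then show ?case by simp
next
  case (Suc k)
  then have "X (s + int k) \<noteq> X (s + int k + 1)" using assms by auto
  moreover have "X (s + int (Suc k)) = X (s + int k + 1)" by (simp add: algebra_simps)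
  ultimately have st: "X (s + int (Suc k)) = (\<not> X (s + int k))" by blast
  have ih: "X (s + int k) = (if even k then X s else \<not> X s)" using Suc by simp
  show ?case
  proof (cases "even k")
    case True
    then show ?thesis using st ih by simp
  next
    case False
    then show ?thesis using st ih by simp
  qed
qed

lemma main:
  fixes X :: "int \<Rightarrow> bool"
  shows "\<lbrakk> nat (p+q) = N; X = tb \<or> X = vb; p \<ge> 1; q \<ge> 1;
     \<forall>x. s \<le> x \<and> x \<le> s + q \<longrightarrow> X x = X (x+p);
     \<forall>x. s \<le> x \<and> x \<le> s + p \<longrightarrow> X x = X (x+q) \<rbrakk> \<Longrightarrow> False"
proof (induction N arbitrary: X s p q rule: less_induct)
  case (less N)
  note H = less.prems
  consider "p > q" | "q > p" | "p = q \<and> even p" | "p = q \<and> odd p" by linarith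
  then show ?case
  proof cases
    case 1
    show False
    proof (rule less.IH[where X=X and s=s and p="p-q" and q=q])
      show "nat (p - q + q) < N" using H 1 by auto
      show "\<forall>x. s \<le> x \<and> x \<le> s + q \<longrightarrow> X x = X (x + (p - q))"
      proof (intro allI impI)
        fix x assume x: "s \<le> x \<and> x \<le> s + q"
        have "X x = X (x+p)" using H(5) x by auto
        moreover have "X (x + (p-q)) = X (x + (p-q) + q)" using H(6) x 1 by auto
        ultimately show "X x = X (x + (p - q))" by simp
      qed
      show "\<forall>x. s \<le> x \<and> x \<le> s + (p - q) \<longrightarrow> X x = X (x + q)" using H(6) H(4) by auto
    qed (use H 1 in auto)
  next
    case 2
    show False
    proof (rule less.IH[where X=X and s=s and p=p and q="q-p"])
      show "nat (p + (q - p)) < N" using H 2 by auto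
      show "\<forall>x. s \<le> x \<and> x \<le> s + p \<longrightarrow> X x = X (x + (q - p))"
      proof (intro allI impI)
        fix x assume x: "s \<le> x \<and> x \<le> s + p"
        have "X x = X (x+q)" using H(6) x by auto
        moreover have "X (x + (q-p)) = X (x + (q-p) + p)" using H(5) x 2 by auto
        ultimately show "X x = X (x + (q - p))" by simp
      qed
      show "\<forall>x. s \<le> x \<and> x \<le> s + (q - p) \<longrightarrow> X x = X (x + p)" using H(5) H(3) by auto
    qed (use H 2 in auto)
  next
    case 3
    then obtain r where r: "p = 2*r" by auto
    define Y where "Y = (\<lambda>n. X (2*n))"
    define c where "c = s mod 2"
    define s' where "s' = s div 2"
    have sc: "s = 2*s' + c" and c01: "c = 0 \<or> c = 1" unfolding c_def s'_def by auto
    have P: "\<forall>y. s' \<le> y \<and> y \<le> s' + r \<longrightarrow> Y y = Y (y + r)"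
    proof (intro allI impI)
      fix y assume y: "s' \<le> y \<and> y \<le> s' + r"
      have e: "X (2*y+c) = X (2*y+c+p)" using H(5) y sc 3 r c01 by auto
      have b1: "X (2*y) \<noteq> X (2*y+1)" using blocky[OF H(2)] by blast
      have b2: "X (2*(y+r)) \<noteq> X (2*(y+r)+1)" using blocky[OF H(2)] by blast
      show "Y y = Y (y + r)" using c01 e b1 b2 r unfolding Y_def
        by (auto simp: algebra_simps)
    qed
    show False
    proof (rule less.IH[where X=Y and s=s' and p=r and q=r])
      show "nat (r + r) < N" using H r by auto
      show "Y = tb \<or> Y = vb" unfolding Y_def using desub[OF H(2)] .
    qed (use P H r 3 in auto)
  next
    case 4
    have D: "\<forall>y. s \<le> y \<and> y < s + p \<longrightarrow> X y \<noteq> X (y+1)"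
    proof (intro allI impI)
      fix y assume y: "s \<le> y \<and> y < s + p"
      show "X y \<noteq> X (y+1)"
      proof (cases "even y")
        case True
        then obtain k where "y = 2*k" by auto
        then show ?thesis using blocky[OF H(2), of k] by simp
      next
        case False
        then have "even (y+p)" using 4 by auto
        then obtain k where k: "y + p = 2*k" by (elim evenE)
        have "X (y+p) \<noteq> X (y+p+1)" using blocky[OF H(2), of k] k by simp
        moreover have "X y = X (y+p)" using H(5) y 4 by auto
        moreover have "X (y+1) = X (y+1+p)" using H(5) y 4 by auto
        ultimately show ?thesis by (simp add: algebra_simps)
      qed
    qed
    have pn: "p = int (nat p)" using H by auto
    have "odd (nat p)" using 4 pn by (metis even_of_nat)
    then have "X (s + int (nat p)) = (\<not> X s)" using alt[OF D, of "nat p"] using pn by (metis order_refl)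
    moreover have "X s = X (s + p)" using H(5) H(4) by auto
    ultimately show False using pn by simp
  qed
qed

theorem theorem2:
  shows "frameless (\<lambda>i j. tm_int (i + j))"
  unfolding frameless_def
proof
  assume "\<exists>m n p q. picture_frame (\<lambda>i j. tm_int (i + j)) m n p q"
  then obtain m n p q where F: "picture_frame (\<lambda>i j. tm_int (i + j)) m n p q" by blast
  have eq: "\<And>a b. (tm_int a = tm_int b) = (tb a = tb b)" by (simp add: tm_tb)
  have 1: "p \<ge> 1" "q \<ge> 1" using F unfolding picture_frame_def by auto
  have 2: "\<forall>x. m+n \<le> x \<and> x \<le> m+n + q \<longrightarrow> tb x = tb (x+p)"
  proof (intro allI impI)
    fix x assume x: "m+n \<le> x \<and> x \<le> m+n + q"
    have "\<forall>i. 0 \<le> i \<and> i \<le> q \<longrightarrow> tm_int (m + (n + i)) = tm_int (m + p + (n + i))"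
      using F unfolding picture_frame_def by auto
    moreover have "0 \<le> x-m-n \<and> x-m-n \<le> q" using x by simp
    ultimately have "tm_int (m + (n + (x-m-n))) = tm_int (m + p + (n + (x-m-n)))"
      by blast
    then show "tb x = tb (x+p)" by (simp add: eq algebra_simps)
  qed
  have 3: "\<forall>x. m+n \<le> x \<and> x \<le> m+n + p \<longrightarrow> tb x = tb (x+q)"
  proof (intro allI impI)
    fix x assume x: "m+n \<le> x \<and> x \<le> m+n + p"
    have "\<forall>j. 0 \<le> j \<and> j \<le> p \<longrightarrow> tm_int (m + j + n) = tm_int (m + j + (n + q))"
      using F unfolding picture_frame_def by auto
    moreover have "0 \<le> x-m-n \<and> x-m-n \<le> p" using x by simp
    ultimately have "tm_int (m + (x-m-n) + n) = tm_int (m + (x-m-n) + (n + q))"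
      by blast
    then show "tb x = tb (x+q)" by (simp add: eq algebra_simps)
  qed
  show False using main[OF refl, of tb p q "m+n"] 1 2 3 by auto
qed

end
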